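(* Let $\Omega = [a,b)$ be a bounded interval with periodic boundary conditions, let $k \ge 0$ be an integer, let $T_k$ be the space of real-valued trigonometric polynomials on $\Omega$ of degree at most $k$, let $P$ denote the $L^2(\Omega)$-orthogonal projection onto $T_k$, let $\beta \in \mathbb{R}$ and $\tau > 0$. Let $(v, w, \nu, \omega) \colon I \to T_k^4$ (with $I$ an open time interval) be a continuously differentiable solution of the Fourier Galerkin semidiscretization of the hyperbolic approximation of the nonlinear Schrödinger equation, \[ \begin{aligned} v_t &= -\omega_x - \beta P \bigl( (v^2 + w^2) w \bigr), \\ w_t &= \nu_x + \beta P \bigl( (v^2 + w^2) v \bigr), \\ \tau \nu_t &= w_x - \omega, \\ \tau \omega_t &= -v_x + \nu. \end{aligned} \] Then the mass, momentum, and energy \[ \begin{aligned} \mathcal{M} &= \int_\Omega \left( v^2 + w^2 + \tau \nu^2 + \tau \omega^2 \right) \mathrm{d}x, \\ \mathcal{P} &= \int_\Omega \left( v w_x - v_x w + \tau \nu \omega_x - \tau \nu_x \omega \right) \mathrm{d}x, \\ \mathcal{E} &= \int_\Omega \Bigl( 2 \nu v_x - \nu^2 + 2 \omega w_x - \omega^2 - \frac{\beta}{2} (v^2 + w^2)^2 \Bigr) \mathrm{d}x \end{aligned} \] are constant in time along $(v,w,\nu,\omega)$.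
   Context: This system arises from the hyperbolization $\mathrm{i} q^0_t + q^1_x = -\beta |q^0|^2 q^0$, $\mathrm{i} \tau q^1_t - q^0_x = -q^1$ with $q^0 = v + \mathrm{i} w$, $q^1 = \nu + \mathrm{i}\omega$. The semidiscretization is an ODE on the finite-dimensional space $T_k^4$. *)

theory Defs
  imports "HOL-Analysis.Analysis"
begin

text \<open>Real trigonometric polynomials of degree at most k on the periodic interval
  [a,b), written as functions on the real line (their periodic extension).\<close>
definition trig_poly :: "real \<Rightarrow> real \<Rightarrow> nat \<Rightarrow> (real \<Rightarrow> real) set" where
  "trig_poly a b k = {f. \<exists>c s :: nat \<Rightarrow> real. \<forall>x.
      f x = c 0 + (\<Sum>j\<in>{1..k}. c j * cos (2 * pi * real j * (x - a) / (b - a))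
                              + s j * sin (2 * pi * real j * (x - a) / (b - a)))}"

definition L2proj :: "real \<Rightarrow> real \<Rightarrow> nat \<Rightarrow> (real \<Rightarrow> real) \<Rightarrow> (real \<Rightarrow> real)" where
  "L2proj a b k f = (THE g. g \<in> trig_poly a b k \<and>
      (\<forall>h\<in>trig_poly a b k. integral {a..b} (\<lambda>x. (f x - g x) * h x) = 0))"

end

theory Submission
  imports Defs
begin

lemma dsum_zero:
  fixes q :: int and n :: nat
  assumes n: "0 < n" and q: "q \<noteq> 0" "\<bar>q\<bar> < int n"
  shows "(\<Sum>m<n. cos (c + of_int q * (2 * pi * real m / real n))) = 0"
    "(\<Sum>m<n. sin (c + of_int q * (2 * pi * real m / real n))) = 0"
proof -
  define z where "z = cis (2 * pi * of_int q / real n)"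
  have "z ^ n = cis (real n * (2 * pi * of_int q / real n))" unfolding z_def by (rule Complex.DeMoivre)
  also have "\<dots> = cis (2 * pi * of_int q)" using n by simp
  also have "\<dots> = 1" by (rule cis_multiple_2pi) simp
  finally have zn: "z ^ n = 1" .
  have z1: "z \<noteq> 1"
  proof
    assume "z = 1"
    hence "cos (2 * pi * of_int q / real n) = 1" unfolding z_def
      by (metis cis.simps(1) one_complex.simps(1))
    then obtain j :: int where j: "2 * pi * of_int q / real n = of_int j * 2 * pi"
      unfolding cos_one_2pi_int by blast
    hence "real_of_int q = of_int j * real n" using n by (simp add: field_simps)
    hence "q = j * int n" by (metis of_int_eq_iff of_int_mult of_int_of_nat_eq)
    thus False using q by (cases "j = 0") (auto simp: abs_mult)
  qed
  have S: "(\<Sum>m<n. cis (c + of_int q * (2 * pi * real m / real n))) = 0"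
  proof -
    have "(\<Sum>m<n. cis (c + of_int q * (2 * pi * real m / real n))) = (\<Sum>m<n. cis c * z ^ m)"
      unfolding z_def Complex.DeMoivre by (intro sum.cong refl) (simp add: cis_mult algebra_simps)
    also have "\<dots> = cis c * (\<Sum>m<n. z ^ m)" by (simp add: sum_distrib_left)
    also have "\<dots> = 0" using z1 zn by (simp add: sum_gp_strict)
    finally show ?thesis .
  qed
  show "(\<Sum>m<n. cos (c + of_int q * (2 * pi * real m / real n))) = 0"
    using arg_cong[OF S, of Re] by (simp add: Re_sum)
  show "(\<Sum>m<n. sin (c + of_int q * (2 * pi * real m / real n))) = 0"
    using arg_cong[OF S, of Im] by (simp add: Im_sum)
qed

definition th :: "real \<Rightarrow> real \<Rightarrow> real \<Rightarrow> real" where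
  "th a b x = 2 * pi * (x - a) / (b - a)"

definition tp :: "real \<Rightarrow> real \<Rightarrow> nat \<Rightarrow> (nat \<Rightarrow> real) \<Rightarrow> (nat \<Rightarrow> real) \<Rightarrow> real \<Rightarrow> real" where
  "tp a b k c s x = c 0 + (\<Sum>j\<in>{1..k}. c j * cos (real j * th a b x) + s j * sin (real j * th a b x))"

lemma th_arg: "2 * pi * real j * (x - a) / (b - a) = real j * th a b x"
  by (simp add: th_def)

lemma trig_poly_tp: "f \<in> trig_poly a b k \<longleftrightarrow> (\<exists>c s. f = tp a b k c s)"
  unfolding trig_poly_def tp_def th_arg by (auto simp: fun_eq_iff)

lemma tp_in: "tp a b k c s \<in> trig_poly a b k"
  unfolding trig_poly_tp by blast

lemma TK_add: "f \<in> trig_poly a b k \<Longrightarrow> g \<in> trig_poly a b k \<Longrightarrow> (\<lambda>x. f x + g x) \<in> trig_poly a b k"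
proof -
  assume "f \<in> trig_poly a b k" "g \<in> trig_poly a b k"
  then obtain c s c' s' where f: "f = tp a b k c s" and g: "g = tp a b k c' s'"
    unfolding trig_poly_tp by blast
  have "(\<lambda>x. f x + g x) = tp a b k (\<lambda>j. c j + c' j) (\<lambda>j. s j + s' j)"
    unfolding f g tp_def by (auto simp: fun_eq_iff algebra_simps sum.distrib)
  thus ?thesis by (simp add: tp_in)
qed

lemma TK_scale: "f \<in> trig_poly a b k \<Longrightarrow> (\<lambda>x. r * f x) \<in> trig_poly a b k"
proof -
  assume "f \<in> trig_poly a b k"
  then obtain c s where f: "f = tp a b k c s"
    unfolding trig_poly_tp by blast
  have "(\<lambda>x. r * f x) = tp a b k (\<lambda>j. r * c j) (\<lambda>j. r * s j)"
    unfolding f tp_def by (auto simp: fun_eq_iff algebra_simps sum_distrib_left)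
  thus ?thesis by (simp add: tp_in)
qed

lemma TK_zero: "(\<lambda>x. 0) \<in> trig_poly a b k"
proof -
  have "(\<lambda>x. 0) = tp a b k (\<lambda>j. 0) (\<lambda>j. 0)" by (simp add: tp_def fun_eq_iff)
  thus ?thesis by (simp add: tp_in)
qed

lemma TK_diff: "f \<in> trig_poly a b k \<Longrightarrow> g \<in> trig_poly a b k \<Longrightarrow> (\<lambda>x. f x - g x) \<in> trig_poly a b k"
  using TK_add[of f a b k "\<lambda>x. (-1) * g x"] TK_scale[of g a b k "-1"] by simp

lemma TK_sum: fixes n :: nat shows "(\<And>m. m < n \<Longrightarrow> f m \<in> trig_poly a b k) \<Longrightarrow> (\<lambda>x. \<Sum>m<n. f m x) \<in> trig_poly a b k"
proof (induction n)
  case 0 then show ?case using TK_zero by simp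
next
  case (Suc n)
  have "(\<lambda>x. (\<Sum>m<n. f m x) + f n x) \<in> trig_poly a b k"
    using Suc by (intro TK_add) auto
  thus ?case by simp
qed

lemma tp_deriv:
  "(tp a b k c s has_real_derivative
     tp a b k (\<lambda>j. if j = 0 then 0 else s j * real j * (2 * pi / (b - a)))
              (\<lambda>j. - c j * real j * (2 * pi / (b - a))) x) (at x)"
proof -
  have th: "(th a b has_real_derivative 2 * pi / (b - a)) (at x)" for x
  proof -
    have eq: "th a b = (\<lambda>x. (2 * pi / (b - a)) * (x - a))" by (auto simp: th_def fun_eq_iff)
    have "((\<lambda>x. (2 * pi / (b - a)) * (x - a)) has_real_derivative (2 * pi / (b - a)) * (1 - 0)) (at x)"
      by (intro DERIV_cmult DERIV_diff DERIV_ident DERIV_const)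
    then show ?thesis unfolding eq by simp
  qed
  have S: "((\<lambda>z. \<Sum>j\<in>{1..k}. c j * cos (real j * th a b z) + s j * sin (real j * th a b z))
     has_real_derivative (\<Sum>j\<in>{1..k}. c j * (- sin (real j * th a b x) * (real j * (2 * pi / (b - a))))
        + s j * (cos (real j * th a b x) * (real j * (2 * pi / (b - a)))))) (at x)"
    by (intro DERIV_sum DERIV_add DERIV_cmult DERIV_cos[THEN DERIV_chain2] DERIV_sin[THEN DERIV_chain2] th)
  have C: "((\<lambda>z. c 0) has_real_derivative 0) (at x)" by (rule DERIV_const)
  show ?thesis
    unfolding tp_def[abs_def] using DERIV_add[OF C S]
    by (simp add: algebra_simps)
qed

lemma TK_deriv: assumes "f \<in> trig_poly a b k"
  shows "(f has_real_derivative deriv f x) (at x)" "deriv f \<in> trig_poly a b k"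
proof -
  obtain c s where f: "f = tp a b k c s" using assms unfolding trig_poly_tp by blast
  have "deriv f = tp a b k (\<lambda>j. if j = 0 then 0 else s j * real j * (2 * pi / (b - a)))
              (\<lambda>j. - c j * real j * (2 * pi / (b - a)))"
    unfolding f using tp_deriv DERIV_imp_deriv by blast
  thus "(f has_real_derivative deriv f x) (at x)" "deriv f \<in> trig_poly a b k"
    using tp_deriv tp_in f by auto
qed

lemma TK_isCont: "f \<in> trig_poly a b k \<Longrightarrow> isCont f x"
  using TK_deriv(1) DERIV_isCont by blast

lemma TK_cont: "f \<in> trig_poly a b k \<Longrightarrow> continuous_on S f"
  using TK_isCont continuous_at_imp_continuous_on by blast

lemma TK_per: assumes "a < b" "f \<in> trig_poly a b k" shows "f b = f a"
proof -
  obtain c s where f: "f = tp a b k c s" using assms unfolding trig_poly_tp by blast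
  have "cos (real j * (2 * pi)) = 1" "sin (real j * (2 * pi)) = 0" for j :: nat
    using cos_int_2pin[of "int j"] sin_int_2pin[of "int j"] by (simp_all add: mult.commute)
  thus ?thesis unfolding f tp_def th_def using assms by simp
qed

lemma dcos: fixes q :: int assumes "0 < n" "\<bar>q\<bar> < int n"
  shows "(\<Sum>m<n. cos (of_int q * (2 * pi * real m / real n))) = (if q = 0 then real n else 0)"
  using dsum_zero(1)[of n q 0] assms by auto

lemma dsin: fixes q :: int assumes "0 < n" "\<bar>q\<bar> < int n"
  shows "(\<Sum>m<n. sin (of_int q * (2 * pi * real m / real n))) = 0"
  using dsum_zero(2)[of n q 0] assms by (cases "q = 0") auto

lemma dcos': assumes "0 < n" "\<bar>q\<bar> < int n" and that: "x = of_int q"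
  shows "(\<Sum>m<n. cos (x * (2 * pi * real m / real n))) = (if q = 0 then real n else 0)"
  using dcos[OF assms(1,2)] that by simp

lemma dsin': assumes "0 < n" "\<bar>q\<bar> < int n" and that: "x = of_int q"
  shows "(\<Sum>m<n. sin (x * (2 * pi * real m / real n))) = 0"
  using dsin[OF assms(1,2)] that by simp

definition ang :: "nat \<Rightarrow> nat \<Rightarrow> real" where "ang n m = 2 * pi * real m / real n"

context
  fixes n k :: nat
  assumes nk: "2 * k < n"
begin

lemma Dcc: assumes "j \<in> {1..k}" "l \<in> {1..k}"
  shows "(\<Sum>m<n. cos (real j * (ang n m)) * cos (real l * (ang n m)))
    = (if j = l then real n / 2 else 0)"
proof -
  have n: "0 < n" using nk by auto
  have "(\<Sum>m<n. cos (real j * (2 * pi * real m / real n)) * cos (real l * (2 * pi * real m / real n)))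
     = (\<Sum>m<n. cos ((real j - real l) * (2 * pi * real m / real n)))/2
     + (\<Sum>m<n. cos ((real j + real l) * (2 * pi * real m / real n)))/2"
  proof -
    have "cos (real j * t) * cos (real l * t) = cos ((real j - real l) * t)/2 + cos ((real j + real l) * t)/2" for t
      by (simp add: cos_times_cos left_diff_distrib distrib_right add_divide_distrib)
    thus ?thesis by (simp only: sum.distrib sum_divide_distrib)
  qed
  also have "(\<Sum>m<n. cos ((real j - real l) * (2 * pi * real m / real n))) = (if int j - int l = 0 then real n else 0)"
    by (rule dcos'[OF n, of "int j - int l"]) (use assms nk in auto)
  also have "(\<Sum>m<n. cos ((real j + real l) * (2 * pi * real m / real n))) = (if int j + int l = 0 then real n else 0)"
    by (rule dcos'[OF n, of "int j + int l"]) (use assms nk in auto)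
  finally show ?thesis unfolding ang_def using assms by auto
qed

lemma Dss: assumes "j \<in> {1..k}" "l \<in> {1..k}"
  shows "(\<Sum>m<n. sin (real j * (ang n m)) * sin (real l * (ang n m)))
    = (if j = l then real n / 2 else 0)"
proof -
  have n: "0 < n" using nk by auto
  have "(\<Sum>m<n. sin (real j * (2 * pi * real m / real n)) * sin (real l * (2 * pi * real m / real n)))
     = (\<Sum>m<n. cos ((real j - real l) * (2 * pi * real m / real n)))/2
     - (\<Sum>m<n. cos ((real j + real l) * (2 * pi * real m / real n)))/2"
  proof -
    have "sin (real j * t) * sin (real l * t) = cos ((real j - real l) * t)/2 - cos ((real j + real l) * t)/2" for t
      by (simp add: sin_times_sin left_diff_distrib distrib_right diff_divide_distrib)
    thus ?thesis by (simp only: sum_subtractf sum_divide_distrib)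
  qed
  also have "(\<Sum>m<n. cos ((real j - real l) * (2 * pi * real m / real n))) = (if int j - int l = 0 then real n else 0)"
    by (rule dcos'[OF n, of "int j - int l"]) (use assms nk in auto)
  also have "(\<Sum>m<n. cos ((real j + real l) * (2 * pi * real m / real n))) = (if int j + int l = 0 then real n else 0)"
    by (rule dcos'[OF n, of "int j + int l"]) (use assms nk in auto)
  finally show ?thesis unfolding ang_def using assms by auto
qed

lemma Dsc: assumes "j \<in> {1..k}" "l \<in> {1..k}"
  shows "(\<Sum>m<n. sin (real j * (ang n m)) * cos (real l * (ang n m))) = 0"
proof -
  have n: "0 < n" using nk by auto
  have "(\<Sum>m<n. sin (real j * (2 * pi * real m / real n)) * cos (real l * (2 * pi * real m / real n)))
     = (\<Sum>m<n. sin ((real j + real l) * (2 * pi * real m / real n)))/2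
     + (\<Sum>m<n. sin ((real j - real l) * (2 * pi * real m / real n)))/2"
  proof -
    have "sin (real j * t) * cos (real l * t) = sin ((real j + real l) * t)/2 + sin ((real j - real l) * t)/2" for t
      by (simp add: sin_times_cos left_diff_distrib distrib_right add_divide_distrib)
    thus ?thesis by (simp only: sum.distrib sum_divide_distrib)
  qed
  also have "(\<Sum>m<n. sin ((real j - real l) * (2 * pi * real m / real n))) = 0"
    by (rule dsin'[OF n, of "int j - int l"]) (use assms nk in auto)
  also have "(\<Sum>m<n. sin ((real j + real l) * (2 * pi * real m / real n))) = 0"
    by (rule dsin'[OF n, of "int j + int l"]) (use assms nk in auto)
  finally show ?thesis unfolding ang_def by simp
qed

lemma D1c: assumes "j \<in> {1..k}"
  shows "(\<Sum>m<n. cos (real j * (ang n m))) = 0"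
    "(\<Sum>m<n. sin (real j * (ang n m))) = 0"
proof -
  have n: "0 < n" using nk by auto
  show "(\<Sum>m<n. cos (real j * (ang n m))) = 0"
    unfolding ang_def using dcos'[OF n, of "int j"] assms nk by auto
  show "(\<Sum>m<n. sin (real j * (ang n m))) = 0"
    unfolding ang_def using dsin'[OF n, of "int j"] assms nk by auto
qed

end

lemma sum_expand1:
  fixes c0 :: real shows "(\<Sum>m<n. (c0 + (\<Sum>j\<in>J. c j * C j m + s j * S j m)) * g m)
   = c0 * (\<Sum>m<n. g m) + (\<Sum>j\<in>J. c j * (\<Sum>m<n. C j m * g m) + s j * (\<Sum>m<n. S j m * g m))"
proof -
  have p: "(c0 + (\<Sum>j\<in>J. c j * C j m + s j * S j m)) * g m
     = c0 * g m + (\<Sum>j\<in>J. c j * (C j m * g m) + s j * (S j m * g m))" for m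
    by (simp only: distrib_right sum_distrib_right mult.assoc)
  have "(\<Sum>m<n. (c0 + (\<Sum>j\<in>J. c j * C j m + s j * S j m)) * g m)
      = (\<Sum>m<n. c0 * g m) + (\<Sum>m<n. \<Sum>j\<in>J. c j * (C j m * g m) + s j * (S j m * g m))"
    unfolding p by (rule sum.distrib)
  also have "(\<Sum>m<n. \<Sum>j\<in>J. c j * (C j m * g m) + s j * (S j m * g m))
     = (\<Sum>j\<in>J. \<Sum>m<n. c j * (C j m * g m) + s j * (S j m * g m))" by (rule sum.swap)
  also have "\<dots> = (\<Sum>j\<in>J. c j * (\<Sum>m<n. C j m * g m) + s j * (\<Sum>m<n. S j m * g m))"
    by (simp only: sum.distrib sum_distrib_left)
  finally show ?thesis by (simp only: sum_distrib_left)
qed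

lemma sum_expand2:
  fixes d :: real shows "(\<Sum>m<n. F m * (d + (\<Sum>j\<in>J. A j m * P j + B j m * Q j)))
   = d * (\<Sum>m<n. F m) + (\<Sum>j\<in>J. P j * (\<Sum>m<n. F m * A j m) + Q j * (\<Sum>m<n. F m * B j m))"
proof -
  have p: "F m * (d + (\<Sum>j\<in>J. A j m * P j + B j m * Q j))
     = d * F m + (\<Sum>j\<in>J. P j * (F m * A j m) + Q j * (F m * B j m))" for m
  proof -
    have "F m * (d + (\<Sum>j\<in>J. A j m * P j + B j m * Q j)) = F m * d + (\<Sum>j\<in>J. F m * (A j m * P j + B j m * Q j))"
      by (simp only: distrib_left sum_distrib_left)
    also have "\<dots> = d * F m + (\<Sum>j\<in>J. P j * (F m * A j m) + Q j * (F m * B j m))"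
      by (intro arg_cong2[where f="(+)"] sum.cong refl) (simp_all add: algebra_simps)
    finally show ?thesis .
  qed
  have "(\<Sum>m<n. F m * (d + (\<Sum>j\<in>J. A j m * P j + B j m * Q j)))
      = (\<Sum>m<n. d * F m) + (\<Sum>m<n. \<Sum>j\<in>J. P j * (F m * A j m) + Q j * (F m * B j m))"
    unfolding p by (rule sum.distrib)
  also have "(\<Sum>m<n. \<Sum>j\<in>J. P j * (F m * A j m) + Q j * (F m * B j m))
     = (\<Sum>j\<in>J. \<Sum>m<n. P j * (F m * A j m) + Q j * (F m * B j m))" by (rule sum.swap)
  also have "\<dots> = (\<Sum>j\<in>J. P j * (\<Sum>m<n. F m * A j m) + Q j * (\<Sum>m<n. F m * B j m))"
    by (simp only: sum.distrib sum_distrib_left)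
  finally show ?thesis by (simp only: sum_distrib_left)
qed

definition xp :: "real \<Rightarrow> real \<Rightarrow> nat \<Rightarrow> nat \<Rightarrow> real" where
  "xp a b n m = a + real m * (b - a) / real n"

lemma th_xp: "a < b \<Longrightarrow> 0 < n \<Longrightarrow> th a b (xp a b n m) = ang n m"
  by (simp add: th_def xp_def ang_def)

definition Lg :: "real \<Rightarrow> real \<Rightarrow> nat \<Rightarrow> nat \<Rightarrow> nat \<Rightarrow> real \<Rightarrow> real" where
  "Lg a b n k m = tp a b k (\<lambda>j. if j = 0 then 1 / real n else 2 / real n * cos (real j * ang n m))
      (\<lambda>j. 2 / real n * sin (real j * ang n m))"

lemma Lg_TK: "Lg a b n k m \<in> trig_poly a b k"
  unfolding Lg_def by (rule tp_in)

context
  fixes n k :: nat and a b :: real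
  assumes nk: "2 * k < n" and ab: "a < b"
begin

lemma n0: "0 < n" using nk by auto

lemma tp_xp: "tp a b k c s (xp a b n m) = c 0 + (\<Sum>j\<in>{1..k}. c j * cos (real j * ang n m)
   + s j * sin (real j * ang n m))"
  unfolding tp_def th_xp[OF ab n0] ..

lemma E0: "(\<Sum>m<n. tp a b k c s (xp a b n m)) = real n * c 0"
proof -
  have "(\<Sum>m<n. tp a b k c s (xp a b n m)) = (\<Sum>m<n. tp a b k c s (xp a b n m) * 1)" by simp
  also have "\<dots> = c 0 * real n + (\<Sum>j\<in>{1..k}. c j * 0 + s j * 0)"
    unfolding tp_xp sum_expand1
    by (intro arg_cong2[where f="(+)"] sum.cong) (auto simp: D1c[OF nk])
  finally show ?thesis by simp
qed

lemma Ec: assumes l: "l \<in> {1..k}"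
  shows "(\<Sum>m<n. tp a b k c s (xp a b n m) * cos (real l * ang n m)) = real n / 2 * c l"
proof -
  have "(\<Sum>m<n. tp a b k c s (xp a b n m) * cos (real l * ang n m))
     = c 0 * 0 + (\<Sum>j\<in>{1..k}. (if j = l then c j * (real n / 2) else 0))"
    unfolding tp_xp sum_expand1 using l
    by (intro arg_cong2[where f="(+)"] sum.cong) (auto simp: D1c[OF nk] Dcc[OF nk] Dsc[OF nk])
  also have "\<dots> = real n / 2 * c l" using l by (simp add: sum.delta)
  finally show ?thesis .
qed

lemma Es: assumes l: "l \<in> {1..k}"
  shows "(\<Sum>m<n. tp a b k c s (xp a b n m) * sin (real l * ang n m)) = real n / 2 * s l"
proof -
  have Dcs: "(\<Sum>m<n. cos (real j * ang n m) * sin (real l * ang n m)) = 0"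
    if "j \<in> {1..k}" for j
    using Dsc[OF nk l that] by (simp add: mult.commute)
  have "(\<Sum>m<n. tp a b k c s (xp a b n m) * sin (real l * ang n m))
     = c 0 * 0 + (\<Sum>j\<in>{1..k}. (if j = l then s j * (real n / 2) else 0))"
    unfolding tp_xp sum_expand1 using l
    by (intro arg_cong2[where f="(+)"] sum.cong) (auto simp: D1c[OF nk] Dss[OF nk] Dcs)
  also have "\<dots> = real n / 2 * s l" using l by (simp add: sum.delta)
  finally show ?thesis .
qed

lemma interp_tp: "(\<Sum>m<n. tp a b k c s (xp a b n m) * Lg a b n k m x) = tp a b k c s x"
proof -
  have L: "Lg a b n k m x = 1 / real n + (\<Sum>j\<in>{1..k}. (2 / real n * cos (real j * ang n m)) * cos (real j * th a b x)
      + (2 / real n * sin (real j * ang n m)) * sin (real j * th a b x))" for m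
    unfolding Lg_def tp_def by (intro arg_cong2[where f="(+)"] sum.cong refl) simp_all
  have A: "(\<Sum>m<n. tp a b k c s (xp a b n m) * (2 / real n * cos (real j * ang n m))) = c j"
    if "j \<in> {1..k}" for j
  proof -
    have "(\<Sum>m<n. tp a b k c s (xp a b n m) * (2 / real n * cos (real j * ang n m)))
       = 2 / real n * (\<Sum>m<n. tp a b k c s (xp a b n m) * cos (real j * ang n m))"
      unfolding sum_distrib_left by (intro sum.cong refl) (simp add: mult_ac)
    also have "\<dots> = c j" unfolding Ec[OF that] using n0 by simp
    finally show ?thesis .
  qed
  have B: "(\<Sum>m<n. tp a b k c s (xp a b n m) * (2 / real n * sin (real j * ang n m))) = s j"
    if "j \<in> {1..k}" for j
  proof -
    have "(\<Sum>m<n. tp a b k c s (xp a b n m) * (2 / real n * sin (real j * ang n m)))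
       = 2 / real n * (\<Sum>m<n. tp a b k c s (xp a b n m) * sin (real j * ang n m))"
      unfolding sum_distrib_left by (intro sum.cong refl) (simp add: mult_ac)
    also have "\<dots> = s j" unfolding Es[OF that] using n0 by simp
    finally show ?thesis .
  qed
  have S: "(\<Sum>j\<in>{1..k}. cos (real j * th a b x) * (\<Sum>m<n. tp a b k c s (xp a b n m) * (2 / real n * cos (real j * ang n m)))
      + sin (real j * th a b x) * (\<Sum>m<n. tp a b k c s (xp a b n m) * (2 / real n * sin (real j * ang n m))))
    = (\<Sum>j\<in>{1..k}. c j * cos (real j * th a b x) + s j * sin (real j * th a b x))"
    by (rule sum.cong) (simp_all only: A B mult.commute)
  have C0: "1 / real n * (real n * c 0) = c 0" using n0 by simp
  show ?thesis
    unfolding L sum_expand2 E0 S tp_def[of a b k c s x] C0 ..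
qed

lemma interp: assumes "f \<in> trig_poly a b k"
  shows "f x = (\<Sum>m<n. f (xp a b n m) * Lg a b n k m x)"
proof -
  obtain c s where f: "f = tp a b k c s" using assms unfolding trig_poly_tp by blast
  show ?thesis unfolding f by (rule interp_tp[symmetric])
qed

lemma interp_fun: assumes "f \<in> trig_poly a b k"
  shows "f = (\<lambda>x. \<Sum>m<n. f (xp a b n m) * Lg a b n k m x)"
  using interp[OF assms] by (intro ext) assumption

end

lemma th_deriv: "(th a b has_real_derivative 2 * pi / (b - a)) (at x)"
proof -
  have eq: "th a b = (\<lambda>x. (2 * pi / (b - a)) * (x - a))" by (auto simp: th_def fun_eq_iff)
  have "((\<lambda>x. (2 * pi / (b - a)) * (x - a)) has_real_derivative (2 * pi / (b - a)) * (1 - 0)) (at x)"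
    by (intro DERIV_cmult DERIV_diff DERIV_ident DERIV_const)
  then show ?thesis unfolding eq by simp
qed

lemma per_int: fixes q :: int
  shows "sin (of_int q * (2 * pi) + c) = sin c" "cos (of_int q * (2 * pi) + c) = cos c"
  using sin_int_2pin[of q] cos_int_2pin[of q]
  by (simp_all add: sin_add cos_add mult.commute)

context
  fixes a b :: real
  assumes ab: "a < b"
begin

lemma th_a: "th a b a = 0" and th_b: "th a b b = 2 * pi"
  using ab by (auto simp: th_def)

lemma int_cos: fixes q :: int assumes q: "q \<noteq> 0"
  shows "((\<lambda>x. cos (of_int q * th a b x + c)) has_integral 0) {a..b}"
    "((\<lambda>x. sin (of_int q * th a b x + c)) has_integral 0) {a..b}"
proof -
  define w where "w = of_int q * (2 * pi / (b - a))"
  have w: "w \<noteq> 0" using q ab by (simp add: w_def)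
  have d1: "((\<lambda>x. sin (of_int q * th a b x + c) / w) has_real_derivative cos (of_int q * th a b x + c)) (at x)" for x
    using w by (auto intro!: derivative_eq_intros th_deriv simp: w_def)
  have d2: "((\<lambda>x. - cos (of_int q * th a b x + c) / w) has_real_derivative sin (of_int q * th a b x + c)) (at x)" for x
    using w by (auto intro!: derivative_eq_intros th_deriv simp: w_def)
  have "((\<lambda>x. cos (of_int q * th a b x + c)) has_integral
     (sin (of_int q * th a b b + c) / w - sin (of_int q * th a b a + c) / w)) {a..b}"
    using ab d1 by (intro fundamental_theorem_of_calculus)
       (auto simp: has_real_derivative_iff_has_vector_derivative[symmetric] intro: has_field_derivative_at_within)
  thus "((\<lambda>x. cos (of_int q * th a b x + c)) has_integral 0) {a..b}"
    unfolding th_a th_b per_int by simp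
  have "((\<lambda>x. sin (of_int q * th a b x + c)) has_integral
     (- cos (of_int q * th a b b + c) / w - - cos (of_int q * th a b a + c) / w)) {a..b}"
    using ab d2 by (intro fundamental_theorem_of_calculus)
       (auto simp: has_real_derivative_iff_has_vector_derivative[symmetric] intro: has_field_derivative_at_within)
  thus "((\<lambda>x. sin (of_int q * th a b x + c)) has_integral 0) {a..b}"
    unfolding th_a th_b per_int by simp
qed

lemma int_cos': fixes q :: int assumes q: "q \<noteq> 0" "r = of_int q"
  shows "((\<lambda>x. cos (r * th a b x)) has_integral 0) {a..b}"
    "((\<lambda>x. sin (r * th a b x)) has_integral 0) {a..b}"
  using int_cos[OF q(1), of 0] q(2) by auto

context fixes k :: nat
begin

lemma Icc: assumes "j \<in> {1..k}" "l \<in> {1..k}"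
  shows "((\<lambda>x. cos (real j * th a b x) * cos (real l * th a b x)) has_integral
     (if j = l then (b - a) / 2 else 0)) {a..b}"
proof -
  have e: "cos (real j * t) * cos (real l * t) = cos ((real j - real l) * t)/2 + cos ((real j + real l) * t)/2" for t
    by (simp add: cos_times_cos left_diff_distrib distrib_right add_divide_distrib)
  have 2: "((\<lambda>x. cos ((real j + real l) * th a b x) / 2) has_integral 0 / 2) {a..b}"
    by (intro has_integral_divide int_cos'(1)[of "int j + int l"]) (use assms in auto)
  have 1: "((\<lambda>x. cos ((real j - real l) * th a b x) / 2) has_integral (if j = l then (b - a) / 2 else 0)) {a..b}"
  proof (cases "j = l")
    case True
    then show ?thesis using has_integral_const_real[of "1/2::real" a b] ab by (simp add: field_simps)
  next
    case False
    then show ?thesis using has_integral_divide[OF int_cos'(1)[of "int j - int l" "real j - real l"], of 2] by auto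
  qed
  show ?thesis unfolding e using has_integral_add[OF 1 2] by simp
qed

lemma Iss: assumes "j \<in> {1..k}" "l \<in> {1..k}"
  shows "((\<lambda>x. sin (real j * th a b x) * sin (real l * th a b x)) has_integral
     (if j = l then (b - a) / 2 else 0)) {a..b}"
proof -
  have e: "sin (real j * t) * sin (real l * t) = cos ((real j - real l) * t)/2 - cos ((real j + real l) * t)/2" for t
    by (simp add: sin_times_sin left_diff_distrib distrib_right diff_divide_distrib)
  have 2: "((\<lambda>x. cos ((real j + real l) * th a b x) / 2) has_integral 0 / 2) {a..b}"
    by (intro has_integral_divide int_cos'(1)[of "int j + int l"]) (use assms in auto)
  have 1: "((\<lambda>x. cos ((real j - real l) * th a b x) / 2) has_integral (if j = l then (b - a) / 2 else 0)) {a..b}"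
  proof (cases "j = l")
    case True
    then show ?thesis using has_integral_const_real[of "1/2::real" a b] ab by (simp add: field_simps)
  next
    case False
    then show ?thesis using has_integral_divide[OF int_cos'(1)[of "int j - int l" "real j - real l"], of 2] by auto
  qed
  show ?thesis unfolding e using has_integral_diff[OF 1 2] by simp
qed

lemma Isc: assumes "j \<in> {1..k}" "l \<in> {1..k}"
  shows "((\<lambda>x. sin (real j * th a b x) * cos (real l * th a b x)) has_integral 0) {a..b}"
proof -
  have e: "sin (real j * t) * cos (real l * t) = sin ((real j + real l) * t)/2 + sin ((real j - real l) * t)/2" for t
    by (simp add: sin_times_cos left_diff_distrib distrib_right add_divide_distrib)
  have 2: "((\<lambda>x. sin ((real j + real l) * th a b x) / 2) has_integral 0 / 2) {a..b}"
    by (intro has_integral_divide int_cos'(2)[of "int j + int l"]) (use assms in auto)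
  have 1: "((\<lambda>x. sin ((real j - real l) * th a b x) / 2) has_integral 0) {a..b}"
  proof (cases "j = l")
    case True
    then show ?thesis by simp
  next
    case False
    then show ?thesis using has_integral_divide[OF int_cos'(2)[of "int j - int l" "real j - real l"], of 2] by auto
  qed
  show ?thesis unfolding e using has_integral_add[OF 2 1] by simp
qed

lemma I1: assumes "j \<in> {1..k}"
  shows "((\<lambda>x. cos (real j * th a b x)) has_integral 0) {a..b}"
    "((\<lambda>x. sin (real j * th a b x)) has_integral 0) {a..b}"
  using int_cos'[of "int j" "real j"] assms by auto

lemma int_expand:
  fixes c0 :: real and h :: "real \<Rightarrow> real"
  assumes H: "(h has_integral H) {a..b}"
    and IC: "\<And>j. j \<in> J \<Longrightarrow> ((\<lambda>x. C j x * h x) has_integral IC j) {a..b}"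
    and IS: "\<And>j. j \<in> J \<Longrightarrow> ((\<lambda>x. S j x * h x) has_integral IS j) {a..b}"
    and J: "finite J"
  shows "((\<lambda>x. (c0 + (\<Sum>j\<in>J. c j * C j x + s j * S j x)) * h x) has_integral
     (c0 * H + (\<Sum>j\<in>J. c j * IC j + s j * IS j))) {a..b}"
proof -
  have "((\<lambda>x. c0 * h x + (\<Sum>j\<in>J. c j * (C j x * h x) + s j * (S j x * h x))) has_integral
     (c0 * H + (\<Sum>j\<in>J. c j * IC j + s j * IS j))) {a..b}"
    by (intro has_integral_add has_integral_mult_right has_integral_sum J H IC IS)
  moreover have "(c0 + (\<Sum>j\<in>J. c j * C j x + s j * S j x)) * h x
     = c0 * h x + (\<Sum>j\<in>J. c j * (C j x * h x) + s j * (S j x * h x))" for x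
    by (simp add: distrib_right sum_distrib_right mult.assoc)
  ultimately show ?thesis by simp
qed

lemma Coef:
  shows "(tp a b k c s has_integral (b - a) * c 0) {a..b}"
    and "l \<in> {1..k} \<Longrightarrow> ((\<lambda>x. cos (real l * th a b x) * tp a b k c s x) has_integral (b - a) / 2 * c l) {a..b}"
    and "l \<in> {1..k} \<Longrightarrow> ((\<lambda>x. sin (real l * th a b x) * tp a b k c s x) has_integral (b - a) / 2 * s l) {a..b}"
proof -
  have "((\<lambda>x. tp a b k c s x * 1) has_integral (c 0 * (b - a) + (\<Sum>j\<in>{1..k}. c j * 0 + s j * 0))) {a..b}"
    unfolding tp_def
    by (rule int_expand) (use has_integral_const_real[of "1::real" a b] ab I1 in auto)
  thus "(tp a b k c s has_integral (b - a) * c 0) {a..b}" by (simp add: mult.commute)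
next
  assume l: "l \<in> {1..k}"
  have "((\<lambda>x. tp a b k c s x * cos (real l * th a b x)) has_integral
      (c 0 * 0 + (\<Sum>j\<in>{1..k}. c j * (if j = l then (b - a) / 2 else 0) + s j * 0))) {a..b}"
    unfolding tp_def
    by (rule int_expand) (use I1 l Icc Isc in auto)
  moreover have "c 0 * 0 + (\<Sum>j\<in>{1..k}. c j * (if j = l then (b - a) / 2 else 0) + s j * 0) = (b - a) / 2 * c l"
  proof -
    have "(\<Sum>j\<in>{1..k}. c j * (if j = l then (b - a) / 2 else 0) + s j * 0)
      = (\<Sum>j\<in>{1..k}. if j = l then c j * ((b - a) / 2) else 0)" by (rule sum.cong) auto
    thus ?thesis using l by (simp add: sum.delta)
  qed
  moreover have "(\<lambda>x. cos (real l * th a b x) * tp a b k c s x) = (\<lambda>x. tp a b k c s x * cos (real l * th a b x))"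
    by (simp add: fun_eq_iff mult.commute)
  ultimately show "((\<lambda>x. cos (real l * th a b x) * tp a b k c s x) has_integral (b - a) / 2 * c l) {a..b}"
    by (simp only:)
next
  assume l: "l \<in> {1..k}"
  have Ics: "((\<lambda>x. cos (real j * th a b x) * sin (real l * th a b x)) has_integral 0) {a..b}"
    if "j \<in> {1..k}" for j
    using Isc[OF l that] by (simp add: mult.commute)
  have "((\<lambda>x. tp a b k c s x * sin (real l * th a b x)) has_integral
      (c 0 * 0 + (\<Sum>j\<in>{1..k}. c j * 0 + s j * (if j = l then (b - a) / 2 else 0)))) {a..b}"
    unfolding tp_def
    by (rule int_expand) (use I1 l Iss Ics in auto)
  moreover have "c 0 * 0 + (\<Sum>j\<in>{1..k}. c j * 0 + s j * (if j = l then (b - a) / 2 else 0)) = (b - a) / 2 * s l"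
  proof -
    have "(\<Sum>j\<in>{1..k}. c j * 0 + s j * (if j = l then (b - a) / 2 else 0))
      = (\<Sum>j\<in>{1..k}. if j = l then s j * ((b - a) / 2) else 0)" by (rule sum.cong) auto
    thus ?thesis using l by (simp add: sum.delta)
  qed
  moreover have "(\<lambda>x. sin (real l * th a b x) * tp a b k c s x) = (\<lambda>x. tp a b k c s x * sin (real l * th a b x))"
    by (simp add: fun_eq_iff mult.commute)
  ultimately show "((\<lambda>x. sin (real l * th a b x) * tp a b k c s x) has_integral (b - a) / 2 * s l) {a..b}"
    by (simp only:)
qed

end
end

lemma TK_const: "(\<lambda>x. r) \<in> trig_poly a b k"
proof -
  have "(\<lambda>x. r) = tp a b k (\<lambda>j. if j = 0 then r else 0) (\<lambda>j. 0)" by (simp add: tp_def fun_eq_iff)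
  thus ?thesis by (simp add: tp_in)
qed

lemma TK_cos: "l \<in> {1..k} \<Longrightarrow> (\<lambda>x. cos (real l * th a b x)) \<in> trig_poly a b k"
proof -
  assume l: "l \<in> {1..k}"
  have "(\<lambda>x. cos (real l * th a b x)) = tp a b k (\<lambda>j. if j = l then 1 else 0) (\<lambda>j. 0)"
  proof
    fix x
    have "(\<Sum>j\<in>{1..k}. (if j = l then 1 else 0) * cos (real j * th a b x) + 0 * sin (real j * th a b x))
       = (\<Sum>j\<in>{1..k}. if j = l then cos (real j * th a b x) else 0)" by (rule sum.cong) auto
    also have "\<dots> = cos (real l * th a b x)" using l by (simp add: sum.delta)
    finally show "cos (real l * th a b x) = tp a b k (\<lambda>j. if j = l then 1 else 0) (\<lambda>j. 0) x"
      unfolding tp_def using l by simp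
  qed
  thus ?thesis by (simp add: tp_in)
qed

lemma TK_sin: "l \<in> {1..k} \<Longrightarrow> (\<lambda>x. sin (real l * th a b x)) \<in> trig_poly a b k"
proof -
  assume l: "l \<in> {1..k}"
  have "(\<lambda>x. sin (real l * th a b x)) = tp a b k (\<lambda>j. 0) (\<lambda>j. if j = l then 1 else 0)"
  proof
    fix x
    have "(\<Sum>j\<in>{1..k}. 0 * cos (real j * th a b x) + (if j = l then 1 else 0) * sin (real j * th a b x))
       = (\<Sum>j\<in>{1..k}. if j = l then sin (real j * th a b x) else 0)" by (rule sum.cong) auto
    also have "\<dots> = sin (real l * th a b x)" using l by (simp add: sum.delta)
    finally show "sin (real l * th a b x) = tp a b k (\<lambda>j. 0) (\<lambda>j. if j = l then 1 else 0) x"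
      unfolding tp_def using l by simp
  qed
  thus ?thesis by (simp add: tp_in)
qed

context
  fixes a b :: real and k :: nat and f :: "real \<Rightarrow> real"
  assumes ab: "a < b" and fc: "continuous_on {a..b} f"
begin

definition "Cf j = (if j = 0 then integral {a..b} f / (b - a)
   else 2 / (b - a) * integral {a..b} (\<lambda>x. cos (real j * th a b x) * f x))"
definition "Sf j = 2 / (b - a) * integral {a..b} (\<lambda>x. sin (real j * th a b x) * f x)"
definition "gf = tp a b k Cf Sf"

lemma cont_TK: "h \<in> trig_poly a b k \<Longrightarrow> continuous_on {a..b} (\<lambda>x. h x * f x)"
  by (intro continuous_intros fc) (auto intro: TK_cont)

lemma gf_orth: "h \<in> trig_poly a b k \<Longrightarrow> ((\<lambda>x. (f x - gf x) * h x) has_integral 0) {a..b}"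
proof -
  assume "h \<in> trig_poly a b k"
  then obtain c s where h: "h = tp a b k c s" unfolding trig_poly_tp by blast
  have fI: "(f has_integral integral {a..b} f) {a..b}"
    using fc integrable_continuous_interval has_integral_integral by blast
  have H: "((\<lambda>x. f x - gf x) has_integral 0) {a..b}"
    using has_integral_diff[OF fI Coef(1)[OF ab, of k Cf Sf]] ab unfolding gf_def by (simp add: Cf_def)
  have IC: "((\<lambda>x. cos (real j * th a b x) * (f x - gf x)) has_integral 0) {a..b}" if j: "j \<in> {1..k}" for j
  proof -
    have "((\<lambda>x. cos (real j * th a b x) * f x) has_integral integral {a..b} (\<lambda>x. cos (real j * th a b x) * f x)) {a..b}"
      using cont_TK[OF TK_cos[OF j]] integrable_continuous_interval has_integral_integral by blast
    from has_integral_diff[OF this Coef(2)[OF ab j, of Cf Sf]] show ?thesis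
      using ab j unfolding gf_def by (simp add: Cf_def right_diff_distrib)
  qed
  have IS: "((\<lambda>x. sin (real j * th a b x) * (f x - gf x)) has_integral 0) {a..b}" if j: "j \<in> {1..k}" for j
  proof -
    have "((\<lambda>x. sin (real j * th a b x) * f x) has_integral integral {a..b} (\<lambda>x. sin (real j * th a b x) * f x)) {a..b}"
      using cont_TK[OF TK_sin[OF j]] integrable_continuous_interval has_integral_integral by blast
    from has_integral_diff[OF this Coef(3)[OF ab j, of Cf Sf]] show ?thesis
      using ab j unfolding gf_def by (simp add: Sf_def right_diff_distrib)
  qed
  have "((\<lambda>x. (c 0 + (\<Sum>j\<in>{1..k}. c j * cos (real j * th a b x) + s j * sin (real j * th a b x))) * (f x - gf x))
     has_integral (c 0 * 0 + (\<Sum>j\<in>{1..k}. c j * 0 + s j * 0))) {a..b}"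
    by (rule int_expand[OF ab H IC IS]) auto
  thus ?thesis unfolding h tp_def by (simp add: mult.commute)
qed

lemma gf_unique:
  assumes g': "g' \<in> trig_poly a b k" and orth: "\<forall>h\<in>trig_poly a b k. integral {a..b} (\<lambda>x. (f x - g' x) * h x) = 0"
  shows "g' = gf"
proof -
  have gfT: "gf \<in> trig_poly a b k" unfolding gf_def by (rule tp_in)
  have "(\<lambda>x. gf x - g' x) \<in> trig_poly a b k" by (rule TK_diff[OF gfT g'])
  then obtain c s where d: "(\<lambda>x. gf x - g' x) = tp a b k c s" unfolding trig_poly_tp by blast
  have D: "((\<lambda>x. h x * tp a b k c s x) has_integral 0) {a..b}" if h: "h \<in> trig_poly a b k" for h
  proof -
    have "continuous_on {a..b} (\<lambda>x. (f x - g' x) * h x)"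
      by (intro continuous_intros fc TK_cont[OF g'] TK_cont[OF h])
    hence "((\<lambda>x. (f x - g' x) * h x) has_integral 0) {a..b}"
      using orth h integrable_continuous_interval has_integral_integral by metis
    from has_integral_diff[OF this gf_orth[OF h]]
    have "((\<lambda>x. (gf x - g' x) * h x) has_integral 0) {a..b}" by (simp add: algebra_simps)
    moreover have "\<And>x. gf x - g' x = tp a b k c s x" using fun_cong[OF d] by simp
    ultimately show ?thesis by (simp add: mult.commute)
  qed
  have c0: "c 0 = 0"
  proof -
    have "(tp a b k c s has_integral 0) {a..b}" using D[OF TK_const[of 1]] by simp
    thus ?thesis using has_integral_unique[OF Coef(1)[OF ab, of k c s]] ab by force
  qed
  have cl: "c l = 0" if l: "l \<in> {1..k}" for l
    using has_integral_unique[OF Coef(2)[OF ab l, of c s] D[OF TK_cos[OF l]]] ab by simp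
  have sl: "s l = 0" if l: "l \<in> {1..k}" for l
    using has_integral_unique[OF Coef(3)[OF ab l, of c s] D[OF TK_sin[OF l]]] ab by simp
  have "tp a b k c s x = 0" for x
    unfolding tp_def using c0 cl sl by simp
  hence "gf x - g' x = 0" for x using d by metis
  thus ?thesis by (auto simp: fun_eq_iff)
qed

lemma L2proj_eq: "L2proj a b k f = gf"
  unfolding L2proj_def
proof (rule the_equality)
  show "gf \<in> trig_poly a b k \<and> (\<forall>h\<in>trig_poly a b k. integral {a..b} (\<lambda>x. (f x - gf x) * h x) = 0)"
    using gf_orth integral_unique unfolding gf_def by (auto intro: tp_in)
next
  fix g' assume "g' \<in> trig_poly a b k \<and> (\<forall>h\<in>trig_poly a b k. integral {a..b} (\<lambda>x. (f x - g' x) * h x) = 0)"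
  thus "g' = gf" using gf_unique by blast
qed

lemma L2proj_TK: "L2proj a b k f \<in> trig_poly a b k"
  unfolding L2proj_eq gf_def by (rule tp_in)

lemma L2proj_orth: "h \<in> trig_poly a b k \<Longrightarrow> ((\<lambda>x. (f x - L2proj a b k f x) * h x) has_integral 0) {a..b}"
  unfolding L2proj_eq by (rule gf_orth)

end

lemma deriv_interp:
  assumes nk: "2 * k < n" and ab: "a < b" and g: "g \<in> trig_poly a b k"
  shows "deriv g x = (\<Sum>m<n. g (xp a b n m) * deriv (Lg a b n k m) x)"
proof -
  have "((\<lambda>x. \<Sum>m<n. g (xp a b n m) * Lg a b n k m x) has_real_derivative
      (\<Sum>m<n. g (xp a b n m) * deriv (Lg a b n k m) x)) (at x)"
    by (intro DERIV_sum DERIV_cmult TK_deriv(1)[OF Lg_TK])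
  hence "(g has_real_derivative (\<Sum>m<n. g (xp a b n m) * deriv (Lg a b n k m) x)) (at x)"
    using interp_fun[OF nk ab g] by simp
  thus ?thesis by (rule DERIV_imp_deriv)
qed

lemma joint_cont:
  fixes A :: "real \<Rightarrow> nat \<Rightarrow> real" and B :: "nat \<Rightarrow> real \<Rightarrow> real" and I :: "real set"
  assumes A: "\<And>m. m < n \<Longrightarrow> continuous_on I (\<lambda>t. A t m)"
    and B: "\<And>m. continuous_on UNIV (B m)"
  shows "continuous_on (I \<times> UNIV) (\<lambda>p. \<Sum>m<n. A (fst p) m * B m (snd p))"
proof -
  have "continuous_on (I \<times> UNIV) (\<lambda>p. A (fst p) m * B m (snd p))" if "m \<in> {..<n}" for m
  proof (rule continuous_on_mult)
    have "continuous_on I (\<lambda>t. A t m)" using A that by auto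
    thus "continuous_on (I \<times> UNIV) (\<lambda>p. A (fst p) m)"
      by (rule continuous_on_compose2[where f=fst]) (auto intro: continuous_intros)
    show "continuous_on (I \<times> UNIV) (\<lambda>p. B m (snd p))"
      by (rule continuous_on_compose2[OF B[of m]]) (auto intro: continuous_intros)
  qed
  thus ?thesis by (intro continuous_on_sum) auto
qed

lemma time_setup:
  fixes f Df :: "real \<Rightarrow> real \<Rightarrow> real"
  assumes ab: "a < b" and I: "open I"
    and fT: "\<forall>t\<in>I. f t \<in> trig_poly a b k"
    and fd: "\<forall>t\<in>I. \<forall>x. ((\<lambda>s. f s x) has_real_derivative Df t x) (at t)"
    and DfT: "\<forall>t\<in>I. Df t \<in> trig_poly a b k"
    and C: "\<forall>x. continuous_on I (\<lambda>t. deriv (\<lambda>s. f s x) t)"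
  shows "continuous_on (I \<times> UNIV) (\<lambda>p. f (fst p) (snd p))"
    "continuous_on (I \<times> UNIV) (\<lambda>p. deriv (f (fst p)) (snd p))"
    "continuous_on (I \<times> UNIV) (\<lambda>p. Df (fst p) (snd p))"
    "continuous_on (I \<times> UNIV) (\<lambda>p. deriv (Df (fst p)) (snd p))"
    "\<forall>t\<in>I. \<forall>x. ((\<lambda>s. deriv (f s) x) has_real_derivative deriv (Df t) x) (at t)"
proof -
  define n where "n = 2 * k + 1"
  have nk: "2 * k < n" unfolding n_def by simp
  have cf: "continuous_on I (\<lambda>t. f t (xp a b n m))" for m
    using fd by (intro continuous_at_imp_continuous_on ballI DERIV_isCont) auto
  have cD: "continuous_on I (\<lambda>t. Df t (xp a b n m))" for m
  proof -
    have "continuous_on I (\<lambda>t. deriv (\<lambda>s. f s (xp a b n m)) t)" using C by blast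
    moreover have "\<And>t. t \<in> I \<Longrightarrow> deriv (\<lambda>s. f s (xp a b n m)) t = Df t (xp a b n m)"
      using fd DERIV_imp_deriv by blast
    ultimately show ?thesis using continuous_on_cong by fastforce
  qed
  have cL: "continuous_on UNIV (Lg a b n k m)" for m by (rule TK_cont[OF Lg_TK])
  have cL': "continuous_on UNIV (deriv (Lg a b n k m))" for m by (rule TK_cont[OF TK_deriv(2)[OF Lg_TK]])
  show "continuous_on (I \<times> UNIV) (\<lambda>p. f (fst p) (snd p))"
  proof (rule continuous_on_cong[THEN iffD1, OF refl _ joint_cont[OF cf cL]])
    fix p assume "p \<in> I \<times> (UNIV :: real set)"
    thus "(\<Sum>m<n. f (fst p) (xp a b n m) * Lg a b n k m (snd p)) = f (fst p) (snd p)"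
      using interp[OF nk ab] fT by auto
  qed
  show "continuous_on (I \<times> UNIV) (\<lambda>p. deriv (f (fst p)) (snd p))"
  proof (rule continuous_on_cong[THEN iffD1, OF refl _ joint_cont[OF cf cL']])
    fix p assume "p \<in> I \<times> (UNIV :: real set)"
    thus "(\<Sum>m<n. f (fst p) (xp a b n m) * deriv (Lg a b n k m) (snd p)) = deriv (f (fst p)) (snd p)"
      using deriv_interp[OF nk ab] fT by auto
  qed
  show "continuous_on (I \<times> UNIV) (\<lambda>p. Df (fst p) (snd p))"
  proof (rule continuous_on_cong[THEN iffD1, OF refl _ joint_cont[OF cD cL]])
    fix p assume "p \<in> I \<times> (UNIV :: real set)"
    thus "(\<Sum>m<n. Df (fst p) (xp a b n m) * Lg a b n k m (snd p)) = Df (fst p) (snd p)"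
      using interp[OF nk ab] DfT by auto
  qed
  show "continuous_on (I \<times> UNIV) (\<lambda>p. deriv (Df (fst p)) (snd p))"
  proof (rule continuous_on_cong[THEN iffD1, OF refl _ joint_cont[OF cD cL']])
    fix p assume "p \<in> I \<times> (UNIV :: real set)"
    thus "(\<Sum>m<n. Df (fst p) (xp a b n m) * deriv (Lg a b n k m) (snd p)) = deriv (Df (fst p)) (snd p)"
      using deriv_interp[OF nk ab] DfT by auto
  qed
  show "\<forall>t\<in>I. \<forall>x. ((\<lambda>s. deriv (f s) x) has_real_derivative deriv (Df t) x) (at t)"
  proof (intro ballI allI)
    fix t x assume t: "t \<in> I"
    have "((\<lambda>s. \<Sum>m<n. f s (xp a b n m) * deriv (Lg a b n k m) x) has_real_derivative
       (\<Sum>m<n. Df t (xp a b n m) * deriv (Lg a b n k m) x)) (at t)"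
      using fd t by (intro DERIV_sum DERIV_cmult_right) auto
    hence "((\<lambda>s. \<Sum>m<n. f s (xp a b n m) * deriv (Lg a b n k m) x) has_real_derivative
       deriv (Df t) x) (at t)"
      using deriv_interp[OF nk ab] DfT t by simp
    thus "((\<lambda>s. deriv (f s) x) has_real_derivative deriv (Df t) x) (at t)"
      by (rule has_field_derivative_transform_within_open[OF _ I t])
        (use deriv_interp[OF nk ab] fT in auto)
  qed
qed

lemma const_on_I:
  fixes F Ft :: "real \<Rightarrow> real \<Rightarrow> real"
  assumes I: "convex I"
    and d: "\<And>t x. t \<in> I \<Longrightarrow> ((\<lambda>s. F s x) has_real_derivative Ft t x) (at t within I)"
    and int: "\<And>t. t \<in> I \<Longrightarrow> F t integrable_on {a..b}"
    and c: "continuous_on (I \<times> {a..b}) (\<lambda>p. Ft (fst p) (snd p))"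
    and z: "\<And>t. t \<in> I \<Longrightarrow> integral {a..b} (Ft t) = 0"
  shows "\<forall>t1\<in>I. \<forall>t2\<in>I. integral {a..b} (F t1) = integral {a..b} (F t2)"
proof -
  have "((\<lambda>t. integral (cbox a b) (F t)) has_field_derivative integral (cbox a b) (Ft t0)) (at t0 within I)"
    if t0: "t0 \<in> I" for t0
  proof (rule leibniz_rule_field_derivative[OF d _ _ t0 I])
    show "\<And>t. t \<in> I \<Longrightarrow> F t integrable_on cbox a b" using int by (simp add: cbox_interval)
    show "continuous_on (I \<times> cbox a b) (\<lambda>(t, x). Ft t x)"
      using c by (simp add: cbox_interval split_def)
  qed auto
  hence "((\<lambda>t. integral {a..b} (F t)) has_field_derivative 0) (at t0 within I)" if "t0 \<in> I" for t0
    using z that by (simp add: cbox_interval)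
  then obtain c where "\<forall>t\<in>I. integral {a..b} (F t) = c"
    using has_field_derivative_zero_constant[OF I] by blast
  thus ?thesis by simp
qed

lemma core_int:
  fixes Q Q' G g1 g2 :: "real \<Rightarrow> real"
  assumes ab: "a \<le> b" and Q: "\<And>x. (Q has_real_derivative Q' x) (at x)" and per: "Q b = Q a"
    and g1: "(g1 has_integral 0) {a..b}" and g2: "(g2 has_integral 0) {a..b}"
    and G: "\<And>x. G x = Q' x + r1 * g1 x + r2 * g2 x"
  shows "(G has_integral 0) {a..b}"
proof -
  have "(Q' has_integral (Q b - Q a)) {a..b}"
    using ab Q by (intro fundamental_theorem_of_calculus)
       (auto simp: has_real_derivative_iff_has_vector_derivative[symmetric] intro: has_field_derivative_at_within)
  hence "(Q' has_integral 0) {a..b}" using per by simp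
  from has_integral_add[OF has_integral_add[OF this has_integral_mult_right[OF g1, of r1]]
      has_integral_mult_right[OF g2, of r2]]
  have "((\<lambda>x. Q' x + r1 * g1 x + r2 * g2 x) has_integral 0) {a..b}" by simp
  moreover have "G = (\<lambda>x. Q' x + r1 * g1 x + r2 * g2 x)" using G by auto
  ultimately show ?thesis by simp
qed

context
  fixes a b \<beta> \<tau> :: real and k :: nat
    and v w nu om A B Dv Dw Dn Do :: "real \<Rightarrow> real"
  assumes ab: "a < b" and tau: "\<tau> \<noteq> 0"
    and vT: "v \<in> trig_poly a b k" and wT: "w \<in> trig_poly a b k"
    and nT: "nu \<in> trig_poly a b k" and omT: "om \<in> trig_poly a b k"
    and DvT: "Dv \<in> trig_poly a b k" and DwT: "Dw \<in> trig_poly a b k"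
    and DnT: "Dn \<in> trig_poly a b k" and DoT: "Do \<in> trig_poly a b k"
    and Dv: "\<And>x. Dv x = - deriv om x - \<beta> * A x"
    and Dw: "\<And>x. Dw x = deriv nu x + \<beta> * B x"
    and Dn: "\<And>x. Dn x = (deriv w x - om x) / \<tau>"
    and Do: "\<And>x. Do x = (- deriv v x + nu x) / \<tau>"
    and oA: "\<And>h. h \<in> trig_poly a b k \<Longrightarrow> ((\<lambda>x. (((v x)^2 + (w x)^2) * w x - A x) * h x) has_integral 0) {a..b}"
    and oB: "\<And>h. h \<in> trig_poly a b k \<Longrightarrow> ((\<lambda>x. (((v x)^2 + (w x)^2) * v x - B x) * h x) has_integral 0) {a..b}"
begin

lemma dv: "(v has_real_derivative deriv v x) (at x)" using TK_deriv(1)[OF vT] .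
lemma dw: "(w has_real_derivative deriv w x) (at x)" using TK_deriv(1)[OF wT] .
lemma dnu: "(nu has_real_derivative deriv nu x) (at x)" using TK_deriv(1)[OF nT] .
lemma dom: "(om has_real_derivative deriv om x) (at x)" using TK_deriv(1)[OF omT] .
lemma dDv: "(Dv has_real_derivative deriv Dv x) (at x)" using TK_deriv(1)[OF DvT] .
lemma dDw: "(Dw has_real_derivative deriv Dw x) (at x)" using TK_deriv(1)[OF DwT] .
lemma dDn: "(Dn has_real_derivative deriv Dn x) (at x)" using TK_deriv(1)[OF DnT] .
lemma dDo: "(Do has_real_derivative deriv Do x) (at x)" using TK_deriv(1)[OF DoT] .

lemmas pers = TK_per[OF ab vT] TK_per[OF ab wT] TK_per[OF ab nT] TK_per[OF ab omT]
  TK_per[OF ab DvT] TK_per[OF ab DwT] TK_per[OF ab DnT] TK_per[OF ab DoT]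

lemma tDn: "\<tau> * Dn x = deriv w x - om x" using tau by (simp add: Dn)
lemma tDo: "\<tau> * Do x = - deriv v x + nu x" using tau by (simp add: Do)

lemma mass_core:
  "((\<lambda>x. 2 * v x * Dv x + 2 * w x * Dw x + \<tau> * (2 * nu x * Dn x) + \<tau> * (2 * om x * Do x)) has_integral 0) {a..b}"
proof (rule core_int[where Q="\<lambda>x. 2 * (w x * nu x - v x * om x)"
    and Q'="\<lambda>x. 2 * (deriv w x * nu x + w x * deriv nu x - (deriv v x * om x + v x * deriv om x))"
    and ?r1.0="2 * \<beta>" and ?r2.0="- 2 * \<beta>", OF _ _ _ oA[OF vT] oB[OF wT]])
  show "a \<le> b" using ab by simp
  show "((\<lambda>x. 2 * (w x * nu x - v x * om x)) has_real_derivative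
     2 * (deriv w x * nu x + w x * deriv nu x - (deriv v x * om x + v x * deriv om x))) (at x)" for x
    by (rule derivative_eq_intros dv dw dnu dom refl | simp add: algebra_simps)+
  show "2 * (w b * nu b - v b * om b) = 2 * (w a * nu a - v a * om a)" by (simp add: pers)
  fix x
  have e1: "\<tau> * (2 * nu x * Dn x) = 2 * nu x * (deriv w x - om x)" unfolding Dn using tau by (simp add: field_simps)
  have e2: "\<tau> * (2 * om x * Do x) = 2 * om x * (- deriv v x + nu x)" unfolding Do using tau by (simp add: field_simps)
  show "2 * v x * Dv x + 2 * w x * Dw x + \<tau> * (2 * nu x * Dn x) + \<tau> * (2 * om x * Do x) =
    2 * (deriv w x * nu x + w x * deriv nu x - (deriv v x * om x + v x * deriv om x)) +
    2 * \<beta> * ((((v x)^2 + (w x)^2) * w x - A x) * v x) +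
    - 2 * \<beta> * ((((v x)^2 + (w x)^2) * v x - B x) * w x)"
    unfolding e1 e2 Dv Dw by (simp add: algebra_simps power2_eq_square)
qed


lemma mom_core:
  "((\<lambda>x. Dv x * deriv w x + v x * deriv Dw x - (deriv Dv x * w x + deriv v x * Dw x)
      + \<tau> * (Dn x * deriv om x + nu x * deriv Do x) - \<tau> * (deriv Dn x * om x + deriv nu x * Do x)) has_integral 0) {a..b}"
proof (rule core_int[where Q="\<lambda>x. v x * Dw x - Dv x * w x + \<tau> * (nu x * Do x - Dn x * om x)
      - \<beta> * ((v x)^2 + (w x)^2)^2 / 2 - (om x)^2 - (nu x)^2"
    and Q'="\<lambda>x. deriv v x * Dw x + v x * deriv Dw x - (deriv Dv x * w x + Dv x * deriv w x)
      + \<tau> * (deriv nu x * Do x + nu x * deriv Do x - (deriv Dn x * om x + Dn x * deriv om x))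
      - \<beta> * ((v x)^2 + (w x)^2) * (2 * v x * deriv v x + 2 * w x * deriv w x)
      - 2 * om x * deriv om x - 2 * nu x * deriv nu x"
    and ?r1.0="2 * \<beta>" and ?r2.0="2 * \<beta>", OF _ _ _ oA[OF TK_deriv(2)[OF wT]] oB[OF TK_deriv(2)[OF vT]]])
  show "a \<le> b" using ab by simp
  show "((\<lambda>x. v x * Dw x - Dv x * w x + \<tau> * (nu x * Do x - Dn x * om x)
      - \<beta> * ((v x)^2 + (w x)^2)^2 / 2 - (om x)^2 - (nu x)^2) has_real_derivative
      deriv v x * Dw x + v x * deriv Dw x - (deriv Dv x * w x + Dv x * deriv w x)
      + \<tau> * (deriv nu x * Do x + nu x * deriv Do x - (deriv Dn x * om x + Dn x * deriv om x))
      - \<beta> * ((v x)^2 + (w x)^2) * (2 * v x * deriv v x + 2 * w x * deriv w x)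
      - 2 * om x * deriv om x - 2 * nu x * deriv nu x) (at x)" for x
    by (rule derivative_eq_intros dv dw dnu dom dDv dDw dDn dDo refl | simp add: algebra_simps power2_eq_square)+
  show "v b * Dw b - Dv b * w b + \<tau> * (nu b * Do b - Dn b * om b)
      - \<beta> * ((v b)^2 + (w b)^2)^2 / 2 - (om b)^2 - (nu b)^2
    = v a * Dw a - Dv a * w a + \<tau> * (nu a * Do a - Dn a * om a)
      - \<beta> * ((v a)^2 + (w a)^2)^2 / 2 - (om a)^2 - (nu a)^2" by (simp add: pers)
  fix x
  show "Dv x * deriv w x + v x * deriv Dw x - (deriv Dv x * w x + deriv v x * Dw x)
      + \<tau> * (Dn x * deriv om x + nu x * deriv Do x) - \<tau> * (deriv Dn x * om x + deriv nu x * Do x)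
    = deriv v x * Dw x + v x * deriv Dw x - (deriv Dv x * w x + Dv x * deriv w x)
      + \<tau> * (deriv nu x * Do x + nu x * deriv Do x - (deriv Dn x * om x + Dn x * deriv om x))
      - \<beta> * ((v x)^2 + (w x)^2) * (2 * v x * deriv v x + 2 * w x * deriv w x)
      - 2 * om x * deriv om x - 2 * nu x * deriv nu x
    + 2 * \<beta> * ((((v x)^2 + (w x)^2) * w x - A x) * deriv w x)
    + 2 * \<beta> * ((((v x)^2 + (w x)^2) * v x - B x) * deriv v x)"
    unfolding Dv Dw Dn Do using tau by (simp add: field_simps power2_eq_square)
qed

lemma en_core:
  "((\<lambda>x. 2 * (Dn x * deriv v x + nu x * deriv Dv x) - 2 * nu x * Dn x
      + 2 * (Do x * deriv w x + om x * deriv Dw x) - 2 * om x * Do x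
      - \<beta> / 2 * (2 * ((v x)^2 + (w x)^2) * (2 * v x * Dv x + 2 * w x * Dw x))) has_integral 0) {a..b}"
proof (rule core_int[where Q="\<lambda>x. 2 * (nu x * Dv x + om x * Dw x)"
    and Q'="\<lambda>x. 2 * (deriv nu x * Dv x + nu x * deriv Dv x + (deriv om x * Dw x + om x * deriv Dw x))"
    and ?r1.0="- 2 * \<beta>" and ?r2.0="- 2 * \<beta>", OF _ _ _ oB[OF DvT] oA[OF DwT]])
  show "a \<le> b" using ab by simp
  show "((\<lambda>x. 2 * (nu x * Dv x + om x * Dw x)) has_real_derivative
      2 * (deriv nu x * Dv x + nu x * deriv Dv x + (deriv om x * Dw x + om x * deriv Dw x))) (at x)" for x
    by (rule derivative_eq_intros dv dw dnu dom dDv dDw dDn dDo refl | simp add: algebra_simps)+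
  show "2 * (nu b * Dv b + om b * Dw b) = 2 * (nu a * Dv a + om a * Dw a)" by (simp add: pers)
  fix x
  have z: "Dn x * (deriv v x - nu x) + Do x * (deriv w x - om x) = 0"
    unfolding Dn Do using tau by (simp add: field_simps)
  have "2 * (Dn x * deriv v x + nu x * deriv Dv x) - 2 * nu x * Dn x
      + 2 * (Do x * deriv w x + om x * deriv Dw x) - 2 * om x * Do x
      - \<beta> / 2 * (2 * ((v x)^2 + (w x)^2) * (2 * v x * Dv x + 2 * w x * Dw x))
    = 2 * (Dn x * (deriv v x - nu x) + Do x * (deriv w x - om x)) + 2 * (nu x * deriv Dv x + om x * deriv Dw x)
      - \<beta> / 2 * (2 * ((v x)^2 + (w x)^2) * (2 * v x * Dv x + 2 * w x * Dw x))"
    by (simp add: algebra_simps)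
  also have "\<dots> = 2 * (nu x * deriv Dv x + om x * deriv Dw x)
      - \<beta> / 2 * (2 * ((v x)^2 + (w x)^2) * (2 * v x * Dv x + 2 * w x * Dw x))"
    unfolding z by simp
  also have "\<dots> = 2 * (deriv nu x * Dv x + nu x * deriv Dv x + (deriv om x * Dw x + om x * deriv Dw x))
      + - 2 * \<beta> * ((((v x)^2 + (w x)^2) * v x - B x) * Dv x)
      + - 2 * \<beta> * ((((v x)^2 + (w x)^2) * w x - A x) * Dw x)"
    unfolding Dv Dw by (simp add: algebra_simps power2_eq_square)
  finally show "2 * (Dn x * deriv v x + nu x * deriv Dv x) - 2 * nu x * Dn x
      + 2 * (Do x * deriv w x + om x * deriv Dw x) - 2 * om x * Do x
      - \<beta> / 2 * (2 * ((v x)^2 + (w x)^2) * (2 * v x * Dv x + 2 * w x * Dw x))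
    = 2 * (deriv nu x * Dv x + nu x * deriv Dv x + (deriv om x * Dw x + om x * deriv Dw x))
      + - 2 * \<beta> * ((((v x)^2 + (w x)^2) * v x - B x) * Dv x)
      + - 2 * \<beta> * ((((v x)^2 + (w x)^2) * w x - A x) * Dw x)" .
qed
end

lemma TK_lin2: "f \<in> trig_poly a b k \<Longrightarrow> g \<in> trig_poly a b k \<Longrightarrow> (\<lambda>x. r * f x + q * g x) \<in> trig_poly a b k"
  by (intro TK_add TK_scale)

theorem theorem6p1:
  fixes a b \<beta> \<tau> :: real and k :: nat and I :: "real set"
    and v w \<nu> \<omega> :: "real \<Rightarrow> real \<Rightarrow> real"
  assumes ab: "a < b" and tau: "\<tau> > 0"
    and I: "open I" "is_interval I" "I \<noteq> {}"
    and inT: "\<forall>t\<in>I. v t \<in> trig_poly a b k \<and> w t \<in> trig_poly a b k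
                    \<and> \<nu> t \<in> trig_poly a b k \<and> \<omega> t \<in> trig_poly a b k"
    and ode_v: "\<forall>t\<in>I. \<forall>x. ((\<lambda>s. v s x) has_real_derivative
        (- deriv (\<omega> t) x - \<beta> * L2proj a b k (\<lambda>y. ((v t y)^2 + (w t y)^2) * w t y) x)) (at t)"
    and ode_w: "\<forall>t\<in>I. \<forall>x. ((\<lambda>s. w s x) has_real_derivative
        (deriv (\<nu> t) x + \<beta> * L2proj a b k (\<lambda>y. ((v t y)^2 + (w t y)^2) * v t y) x)) (at t)"
    and ode_nu: "\<forall>t\<in>I. \<forall>x. ((\<lambda>s. \<nu> s x) has_real_derivative
        ((deriv (w t) x - \<omega> t x) / \<tau>)) (at t)"
    and ode_om: "\<forall>t\<in>I. \<forall>x. ((\<lambda>s. \<omega> s x) has_real_derivative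
        ((- deriv (v t) x + \<nu> t x) / \<tau>)) (at t)"
    and C1: "\<forall>x. continuous_on I (\<lambda>t. deriv (\<lambda>s. v s x) t)
               \<and> continuous_on I (\<lambda>t. deriv (\<lambda>s. w s x) t)
               \<and> continuous_on I (\<lambda>t. deriv (\<lambda>s. \<nu> s x) t)
               \<and> continuous_on I (\<lambda>t. deriv (\<lambda>s. \<omega> s x) t)"
  shows "\<forall>t1\<in>I. \<forall>t2\<in>I.
      integral {a..b} (\<lambda>x. (v t1 x)^2 + (w t1 x)^2 + \<tau> * (\<nu> t1 x)^2 + \<tau> * (\<omega> t1 x)^2)
    = integral {a..b} (\<lambda>x. (v t2 x)^2 + (w t2 x)^2 + \<tau> * (\<nu> t2 x)^2 + \<tau> * (\<omega> t2 x)^2)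
    \<and> integral {a..b} (\<lambda>x. v t1 x * deriv (w t1) x - deriv (v t1) x * w t1 x
          + \<tau> * \<nu> t1 x * deriv (\<omega> t1) x - \<tau> * deriv (\<nu> t1) x * \<omega> t1 x)
    = integral {a..b} (\<lambda>x. v t2 x * deriv (w t2) x - deriv (v t2) x * w t2 x
          + \<tau> * \<nu> t2 x * deriv (\<omega> t2) x - \<tau> * deriv (\<nu> t2) x * \<omega> t2 x)
    \<and> integral {a..b} (\<lambda>x. 2 * \<nu> t1 x * deriv (v t1) x - (\<nu> t1 x)^2
          + 2 * \<omega> t1 x * deriv (w t1) x - (\<omega> t1 x)^2 - \<beta> / 2 * ((v t1 x)^2 + (w t1 x)^2)^2)
    = integral {a..b} (\<lambda>x. 2 * \<nu> t2 x * deriv (v t2) x - (\<nu> t2 x)^2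
          + 2 * \<omega> t2 x * deriv (w t2) x - (\<omega> t2 x)^2 - \<beta> / 2 * ((v t2 x)^2 + (w t2 x)^2)^2)"
proof -
  define A where "A = (\<lambda>t. L2proj a b k (\<lambda>y. ((v t y)^2 + (w t y)^2) * w t y))"
  define B where "B = (\<lambda>t. L2proj a b k (\<lambda>y. ((v t y)^2 + (w t y)^2) * v t y))"
  define Dv where "Dv = (\<lambda>t x. - deriv (\<omega> t) x - \<beta> * A t x)"
  define Dw where "Dw = (\<lambda>t x. deriv (\<nu> t) x + \<beta> * B t x)"
  define Dn where "Dn = (\<lambda>t x. (deriv (w t) x - \<omega> t x) / \<tau>)"
  define Do where "Do = (\<lambda>t x. (- deriv (v t) x + \<nu> t x) / \<tau>)"
  have tau0: "\<tau> \<noteq> 0" using tau by simp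
  have cvx: "convex I" using I(2) by (rule is_interval_convex)
  have vT: "v t \<in> trig_poly a b k" and wT: "w t \<in> trig_poly a b k"
    and nT: "\<nu> t \<in> trig_poly a b k" and oT: "\<omega> t \<in> trig_poly a b k" if "t \<in> I" for t
    using inT that by auto
  have cNw: "continuous_on {a..b} (\<lambda>y. ((v t y)^2 + (w t y)^2) * w t y)" if "t \<in> I" for t
    by (intro continuous_intros TK_cont[OF vT[OF that]] TK_cont[OF wT[OF that]])
  have cNv: "continuous_on {a..b} (\<lambda>y. ((v t y)^2 + (w t y)^2) * v t y)" if "t \<in> I" for t
    by (intro continuous_intros TK_cont[OF vT[OF that]] TK_cont[OF wT[OF that]])
  have AT: "A t \<in> trig_poly a b k" if "t \<in> I" for t
    unfolding A_def by (rule L2proj_TK[OF ab cNw[OF that]])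
  have BT: "B t \<in> trig_poly a b k" if "t \<in> I" for t
    unfolding B_def by (rule L2proj_TK[OF ab cNv[OF that]])
  have oA: "\<And>h. h \<in> trig_poly a b k \<Longrightarrow> ((\<lambda>x. (((v t x)^2 + (w t x)^2) * w t x - A t x) * h x) has_integral 0) {a..b}"
    if "t \<in> I" for t
    unfolding A_def by (rule L2proj_orth[OF ab cNw[OF that]])
  have oB: "\<And>h. h \<in> trig_poly a b k \<Longrightarrow> ((\<lambda>x. (((v t x)^2 + (w t x)^2) * v t x - B t x) * h x) has_integral 0) {a..b}"
    if "t \<in> I" for t
    unfolding B_def by (rule L2proj_orth[OF ab cNv[OF that]])
  have DvT: "Dv t \<in> trig_poly a b k" if "t \<in> I" for t
  proof -
    have eq: "Dv t = (\<lambda>x. (-1) * deriv (\<omega> t) x + (- \<beta>) * A t x)" by (simp add: Dv_def fun_eq_iff)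
    show ?thesis unfolding eq by (rule TK_lin2[OF TK_deriv(2)[OF oT[OF that]] AT[OF that]])
  qed
  have DwT: "Dw t \<in> trig_poly a b k" if "t \<in> I" for t
  proof -
    have eq: "Dw t = (\<lambda>x. 1 * deriv (\<nu> t) x + \<beta> * B t x)" by (simp add: Dw_def fun_eq_iff)
    show ?thesis unfolding eq by (rule TK_lin2[OF TK_deriv(2)[OF nT[OF that]] BT[OF that]])
  qed
  have DnT: "Dn t \<in> trig_poly a b k" if "t \<in> I" for t
  proof -
    have eq: "Dn t = (\<lambda>x. (1 / \<tau>) * deriv (w t) x + (- 1 / \<tau>) * \<omega> t x)" by (simp add: Dn_def fun_eq_iff diff_divide_distrib)
    show ?thesis unfolding eq by (rule TK_lin2[OF TK_deriv(2)[OF wT[OF that]] oT[OF that]])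
  qed
  have DoT: "Do t \<in> trig_poly a b k" if "t \<in> I" for t
  proof -
    have eq: "Do t = (\<lambda>x. (- 1 / \<tau>) * deriv (v t) x + (1 / \<tau>) * \<nu> t x)" by (simp add: Do_def fun_eq_iff diff_divide_distrib)
    show ?thesis unfolding eq by (rule TK_lin2[OF TK_deriv(2)[OF vT[OF that]] nT[OF that]])
  qed
  have dv: "\<forall>t\<in>I. \<forall>x. ((\<lambda>s. v s x) has_real_derivative Dv t x) (at t)"
    using ode_v unfolding Dv_def A_def by simp
  have dw: "\<forall>t\<in>I. \<forall>x. ((\<lambda>s. w s x) has_real_derivative Dw t x) (at t)"
    using ode_w unfolding Dw_def B_def by simp
  have dn: "\<forall>t\<in>I. \<forall>x. ((\<lambda>s. \<nu> s x) has_real_derivative Dn t x) (at t)"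
    using ode_nu unfolding Dn_def by simp
  have do: "\<forall>t\<in>I. \<forall>x. ((\<lambda>s. \<omega> s x) has_real_derivative Do t x) (at t)"
    using ode_om unfolding Do_def by simp
  have Cv: "\<forall>x. continuous_on I (\<lambda>t. deriv (\<lambda>s. v s x) t)" using C1 by blast
  have Cw: "\<forall>x. continuous_on I (\<lambda>t. deriv (\<lambda>s. w s x) t)" using C1 by blast
  have Cn: "\<forall>x. continuous_on I (\<lambda>t. deriv (\<lambda>s. \<nu> s x) t)" using C1 by blast
  have Co: "\<forall>x. continuous_on I (\<lambda>t. deriv (\<lambda>s. \<omega> s x) t)" using C1 by blast
  note Tv = time_setup[OF ab I(1) _ dv _ Cv, of k, OF ballI ballI, OF vT DvT]
  note Tw = time_setup[OF ab I(1) _ dw _ Cw, of k, OF ballI ballI, OF wT DwT]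
  note Tn = time_setup[OF ab I(1) _ dn _ Cn, of k, OF ballI ballI, OF nT DnT]
  note To = time_setup[OF ab I(1) _ do _ Co, of k, OF ballI ballI, OF oT DoT]
  note JC = Tv(1-4) Tw(1-4) Tn(1-4) To(1-4)
  have cT: "continuous_on S f" "continuous_on S (deriv f)" if "f \<in> trig_poly a b k" for f S
    using TK_cont[OF that] TK_cont[OF TK_deriv(2)[OF that]] by auto
  have dv': "((\<lambda>s. v s x) has_real_derivative Dv t x) (at t)"
    and dw': "((\<lambda>s. w s x) has_real_derivative Dw t x) (at t)"
    and dn': "((\<lambda>s. \<nu> s x) has_real_derivative Dn t x) (at t)"
    and do': "((\<lambda>s. \<omega> s x) has_real_derivative Do t x) (at t)"
    and dv'': "((\<lambda>s. deriv (v s) x) has_real_derivative deriv (Dv t) x) (at t)"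
    and dw'': "((\<lambda>s. deriv (w s) x) has_real_derivative deriv (Dw t) x) (at t)"
    and dn'': "((\<lambda>s. deriv (\<nu> s) x) has_real_derivative deriv (Dn t) x) (at t)"
    and do'': "((\<lambda>s. deriv (\<omega> s) x) has_real_derivative deriv (Do t) x) (at t)"
    if "t \<in> I" for t x
    using dv dw dn do Tv(5) Tw(5) Tn(5) To(5) that by auto
  have eqs: "\<And>x. Dv t x = - deriv (\<omega> t) x - \<beta> * A t x" "\<And>x. Dw t x = deriv (\<nu> t) x + \<beta> * B t x"
    "\<And>x. Dn t x = (deriv (w t) x - \<omega> t x) / \<tau>" "\<And>x. Do t x = (- deriv (v t) x + \<nu> t x) / \<tau>" for t
    by (simp_all add: Dv_def Dw_def Dn_def Do_def)
  note cores = mass_core mom_core en_core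
  have core: "((\<lambda>x. 2 * v t x * Dv t x + 2 * w t x * Dw t x + \<tau> * (2 * \<nu> t x * Dn t x) + \<tau> * (2 * \<omega> t x * Do t x)) has_integral 0) {a..b}"
    "((\<lambda>x. Dv t x * deriv (w t) x + v t x * deriv (Dw t) x - (deriv (Dv t) x * w t x + deriv (v t) x * Dw t x)
      + \<tau> * (Dn t x * deriv (\<omega> t) x + \<nu> t x * deriv (Do t) x) - \<tau> * (deriv (Dn t) x * \<omega> t x + deriv (\<nu> t) x * Do t x)) has_integral 0) {a..b}"
    "((\<lambda>x. 2 * (Dn t x * deriv (v t) x + \<nu> t x * deriv (Dv t) x) - 2 * \<nu> t x * Dn t x
      + 2 * (Do t x * deriv (w t) x + \<omega> t x * deriv (Dw t) x) - 2 * \<omega> t x * Do t x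
      - \<beta> / 2 * (2 * ((v t x)^2 + (w t x)^2) * (2 * v t x * Dv t x + 2 * w t x * Dw t x))) has_integral 0) {a..b}"
    if t: "t \<in> I" for t
    using cores[OF ab tau0 vT[OF t] wT[OF t] nT[OF t] oT[OF t] DvT[OF t] DwT[OF t] DnT[OF t] DoT[OF t]
      eqs(1) eqs(2) eqs(3) eqs(4) oA[OF t] oB[OF t]] by auto
  have M: "\<forall>t1\<in>I. \<forall>t2\<in>I.
      integral {a..b} (\<lambda>x. (v t1 x)^2 + (w t1 x)^2 + \<tau> * (\<nu> t1 x)^2 + \<tau> * (\<omega> t1 x)^2)
    = integral {a..b} (\<lambda>x. (v t2 x)^2 + (w t2 x)^2 + \<tau> * (\<nu> t2 x)^2 + \<tau> * (\<omega> t2 x)^2)"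
  proof (rule const_on_I[OF cvx, where Ft="\<lambda>t x. 2 * v t x * Dv t x + 2 * w t x * Dw t x + \<tau> * (2 * \<nu> t x * Dn t x) + \<tau> * (2 * \<omega> t x * Do t x)"])
    fix t x assume t: "t \<in> I"
    show "((\<lambda>s. (v s x)^2 + (w s x)^2 + \<tau> * (\<nu> s x)^2 + \<tau> * (\<omega> s x)^2) has_real_derivative
      2 * v t x * Dv t x + 2 * w t x * Dw t x + \<tau> * (2 * \<nu> t x * Dn t x) + \<tau> * (2 * \<omega> t x * Do t x)) (at t within I)"
      apply (rule has_field_derivative_at_within)
      by (rule derivative_eq_intros dv'[OF t] dw'[OF t] dn'[OF t] do'[OF t] refl | simp)+
  next
    fix t assume t: "t \<in> I"
    show "(\<lambda>x. (v t x)^2 + (w t x)^2 + \<tau> * (\<nu> t x)^2 + \<tau> * (\<omega> t x)^2) integrable_on {a..b}"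
      by (intro integrable_continuous_interval continuous_intros cT vT wT nT oT t)
    show "integral {a..b} (\<lambda>x. 2 * v t x * Dv t x + 2 * w t x * Dw t x + \<tau> * (2 * \<nu> t x * Dn t x) + \<tau> * (2 * \<omega> t x * Do t x)) = 0"
      by (rule integral_unique[OF core(1)[OF t]])
  next
    show "continuous_on (I \<times> {a..b}) (\<lambda>p. 2 * v (fst p) (snd p) * Dv (fst p) (snd p) + 2 * w (fst p) (snd p) * Dw (fst p) (snd p)
      + \<tau> * (2 * \<nu> (fst p) (snd p) * Dn (fst p) (snd p)) + \<tau> * (2 * \<omega> (fst p) (snd p) * Do (fst p) (snd p)))"
      by (rule continuous_on_subset[where t="I \<times> {a..b}", OF _ Sigma_mono])
        (auto intro!: continuous_intros JC)
  qed
  have P: "\<forall>t1\<in>I. \<forall>t2\<in>I. integral {a..b} ((\<lambda>t x. v t x * deriv (w t) x - deriv (v t) x * w t x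
          + \<tau> * \<nu> t x * deriv (\<omega> t) x - \<tau> * deriv (\<nu> t) x * \<omega> t x) t1) = integral {a..b} ((\<lambda>t x. v t x * deriv (w t) x - deriv (v t) x * w t x
          + \<tau> * \<nu> t x * deriv (\<omega> t) x - \<tau> * deriv (\<nu> t) x * \<omega> t x) t2)"
  proof (rule const_on_I[OF cvx, where F="\<lambda>t x. v t x * deriv (w t) x - deriv (v t) x * w t x
          + \<tau> * \<nu> t x * deriv (\<omega> t) x - \<tau> * deriv (\<nu> t) x * \<omega> t x" and Ft="\<lambda>t x. Dv t x * deriv (w t) x + v t x * deriv (Dw t) x - (deriv (Dv t) x * w t x + deriv (v t) x * Dw t x)
      + \<tau> * (Dn t x * deriv (\<omega> t) x + \<nu> t x * deriv (Do t) x) - \<tau> * (deriv (Dn t) x * \<omega> t x + deriv (\<nu> t) x * Do t x)"])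
    fix t x assume t: "t \<in> I"
    show "((\<lambda>s. (\<lambda>t x. v t x * deriv (w t) x - deriv (v t) x * w t x
          + \<tau> * \<nu> t x * deriv (\<omega> t) x - \<tau> * deriv (\<nu> t) x * \<omega> t x) s x) has_real_derivative (\<lambda>t x. Dv t x * deriv (w t) x + v t x * deriv (Dw t) x - (deriv (Dv t) x * w t x + deriv (v t) x * Dw t x)
      + \<tau> * (Dn t x * deriv (\<omega> t) x + \<nu> t x * deriv (Do t) x) - \<tau> * (deriv (Dn t) x * \<omega> t x + deriv (\<nu> t) x * Do t x)) t x) (at t within I)"
      apply (rule has_field_derivative_at_within)
      by (rule derivative_eq_intros dv'[OF t] dw'[OF t] dn'[OF t] do'[OF t]
           dv''[OF t] dw''[OF t] dn''[OF t] do''[OF t] refl | simp add: algebra_simps)+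
  next
    fix t assume t: "t \<in> I"
    show "(\<lambda>t x. v t x * deriv (w t) x - deriv (v t) x * w t x
          + \<tau> * \<nu> t x * deriv (\<omega> t) x - \<tau> * deriv (\<nu> t) x * \<omega> t x) t integrable_on {a..b}"
      by (intro integrable_continuous_interval continuous_intros cT vT wT nT oT t)
    show "integral {a..b} ((\<lambda>t x. Dv t x * deriv (w t) x + v t x * deriv (Dw t) x - (deriv (Dv t) x * w t x + deriv (v t) x * Dw t x)
      + \<tau> * (Dn t x * deriv (\<omega> t) x + \<nu> t x * deriv (Do t) x) - \<tau> * (deriv (Dn t) x * \<omega> t x + deriv (\<nu> t) x * Do t x)) t) = 0"
      using integral_unique[OF core(2)[OF t]] by simp
  next
    show "continuous_on (I \<times> {a..b}) (\<lambda>p. (\<lambda>t x. Dv t x * deriv (w t) x + v t x * deriv (Dw t) x - (deriv (Dv t) x * w t x + deriv (v t) x * Dw t x)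
      + \<tau> * (Dn t x * deriv (\<omega> t) x + \<nu> t x * deriv (Do t) x) - \<tau> * (deriv (Dn t) x * \<omega> t x + deriv (\<nu> t) x * Do t x)) (fst p) (snd p))"
      by (rule continuous_on_subset[where t="I \<times> {a..b}", OF _ Sigma_mono])
        (auto intro!: continuous_intros JC)
  qed
  have E: "\<forall>t1\<in>I. \<forall>t2\<in>I. integral {a..b} ((\<lambda>t x. 2 * \<nu> t x * deriv (v t) x - (\<nu> t x)^2
          + 2 * \<omega> t x * deriv (w t) x - (\<omega> t x)^2 - \<beta> / 2 * ((v t x)^2 + (w t x)^2)^2) t1) = integral {a..b} ((\<lambda>t x. 2 * \<nu> t x * deriv (v t) x - (\<nu> t x)^2
          + 2 * \<omega> t x * deriv (w t) x - (\<omega> t x)^2 - \<beta> / 2 * ((v t x)^2 + (w t x)^2)^2) t2)"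
  proof (rule const_on_I[OF cvx, where F="\<lambda>t x. 2 * \<nu> t x * deriv (v t) x - (\<nu> t x)^2
          + 2 * \<omega> t x * deriv (w t) x - (\<omega> t x)^2 - \<beta> / 2 * ((v t x)^2 + (w t x)^2)^2" and Ft="\<lambda>t x. 2 * (Dn t x * deriv (v t) x + \<nu> t x * deriv (Dv t) x) - 2 * \<nu> t x * Dn t x
      + 2 * (Do t x * deriv (w t) x + \<omega> t x * deriv (Dw t) x) - 2 * \<omega> t x * Do t x
      - \<beta> / 2 * (2 * ((v t x)^2 + (w t x)^2) * (2 * v t x * Dv t x + 2 * w t x * Dw t x))"])
    fix t x assume t: "t \<in> I"
    show "((\<lambda>s. (\<lambda>t x. 2 * \<nu> t x * deriv (v t) x - (\<nu> t x)^2
          + 2 * \<omega> t x * deriv (w t) x - (\<omega> t x)^2 - \<beta> / 2 * ((v t x)^2 + (w t x)^2)^2) s x) has_real_derivative (\<lambda>t x. 2 * (Dn t x * deriv (v t) x + \<nu> t x * deriv (Dv t) x) - 2 * \<nu> t x * Dn t x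
      + 2 * (Do t x * deriv (w t) x + \<omega> t x * deriv (Dw t) x) - 2 * \<omega> t x * Do t x
      - \<beta> / 2 * (2 * ((v t x)^2 + (w t x)^2) * (2 * v t x * Dv t x + 2 * w t x * Dw t x))) t x) (at t within I)"
      apply (rule has_field_derivative_at_within)
      by (rule derivative_eq_intros dv'[OF t] dw'[OF t] dn'[OF t] do'[OF t]
           dv''[OF t] dw''[OF t] dn''[OF t] do''[OF t] refl | simp add: algebra_simps)+
  next
    fix t assume t: "t \<in> I"
    show "(\<lambda>t x. 2 * \<nu> t x * deriv (v t) x - (\<nu> t x)^2
          + 2 * \<omega> t x * deriv (w t) x - (\<omega> t x)^2 - \<beta> / 2 * ((v t x)^2 + (w t x)^2)^2) t integrable_on {a..b}"
      by (intro integrable_continuous_interval continuous_intros cT vT wT nT oT t)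
    show "integral {a..b} ((\<lambda>t x. 2 * (Dn t x * deriv (v t) x + \<nu> t x * deriv (Dv t) x) - 2 * \<nu> t x * Dn t x
      + 2 * (Do t x * deriv (w t) x + \<omega> t x * deriv (Dw t) x) - 2 * \<omega> t x * Do t x
      - \<beta> / 2 * (2 * ((v t x)^2 + (w t x)^2) * (2 * v t x * Dv t x + 2 * w t x * Dw t x))) t) = 0"
      using integral_unique[OF core(3)[OF t]] by simp
  next
    show "continuous_on (I \<times> {a..b}) (\<lambda>p. (\<lambda>t x. 2 * (Dn t x * deriv (v t) x + \<nu> t x * deriv (Dv t) x) - 2 * \<nu> t x * Dn t x
      + 2 * (Do t x * deriv (w t) x + \<omega> t x * deriv (Dw t) x) - 2 * \<omega> t x * Do t x
      - \<beta> / 2 * (2 * ((v t x)^2 + (w t x)^2) * (2 * v t x * Dv t x + 2 * w t x * Dw t x))) (fst p) (snd p))"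
      by (rule continuous_on_subset[where t="I \<times> {a..b}", OF _ Sigma_mono])
        (auto intro!: continuous_intros JC)
  qed
  show ?thesis using M P E by blast
qed

end
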